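(* Let $p$ be a prime and $s\geq 2$. Then (i) $\tau_s(1)=(0,p^{s-2},2p^{s-2},\dots,(p-1)p^{s-2})$; (ii) $\tau_s(p^iu)=p^{i-1}(u,u,\dots,u)$ ($p$ copies, computed in $\mathbb{Z}_{p^{s-1}}$) for all $i\in\{1,\dots,s-1\}$ and $u\in\{0,1,\dots,p^{s-1}-1\}$.
   Context: For $r\geq1$ and $u\in\mathbb{Z}_{p^r}$ with $p$-ary expansion $u=\sum_{i=0}^{r-1}u_ip^i$, $\phi_r(u)=(u_{r-1},\dots,u_{r-1})+(u_0,\dots,u_{r-2})Y_{r-1}\in\mathbb{Z}_p^{p^{r-1}}$, where $Y_1=(0\ 1\ \cdots\ p-1)$ and $Y_k$ is the $k\times p^k$ matrix with first $k-1$ rows $(Y_{k-1}\ \cdots\ Y_{k-1})$ ($p$ copies) and last row $(0,\dots,0,1,\dots,1,\dots,p-1,\dots,p-1)$ (blocks of length $p^{k-1}$); $\phi_1=\mathrm{id}$; $\Phi_r$ applies $\phi_r$ coordinatewise and concatenates. $\gamma_s$ is the coordinate permutation of $\mathbb{Z}_p^{p^{s-1}}$ given by $\gamma_s(\mathbf{x})_{j+ip+1}=\mathbf{x}_{jp^{s-2}+i+1}$ for $j\in\{0,\dots,p-1\}$, $i\in\{0,\dots,p^{s-2}-1\}$. The map $\tau_s:\mathbb{Z}_{p^s}\to\mathbb{Z}_{p^{s-1}}^p$ is $\tau_s(u)=\Phi_{s-1}^{-1}(\gamma_s^{-1}(\phi_s(u)))$; in (ii), $p^iu$ is computed in $\mathbb{Z}_{p^s}$.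 *)

theory Defs
  imports "HOL-Computational_Algebra.Primes"
begin

text \<open>Elements of Z_m are represented by naturals in {0..<m}; vectors over Z_m
  by lists of such naturals. Indices are 0-based.\<close>

definition pdigit :: "nat \<Rightarrow> nat \<Rightarrow> nat \<Rightarrow> nat" where
  "pdigit p u i = (u div p ^ i) mod p"

text \<open>Y p k j c: entry in row j, column c (0-based) of the k x p^k matrix Y_k,
  defined by the paper's recursion (first k-1 rows are p copies of Y_(k-1),
  last row is 0..0 1..1 ... (p-1)..(p-1) in blocks of length p^(k-1)).
  The case k = 0 is the empty matrix; Y p 1 j c = c gives Y_1 = (0 1 ... p-1).\<close>
fun Y :: "nat \<Rightarrow> nat \<Rightarrow> nat \<Rightarrow> nat \<Rightarrow> nat" where
  "Y p 0 j c = 0"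
| "Y p (Suc k) j c = (if j < k then Y p k j (c mod p ^ k) else c div p ^ k)"

definition phi :: "nat \<Rightarrow> nat \<Rightarrow> nat \<Rightarrow> nat list" where
  "phi p r u = map (\<lambda>c. (pdigit p u (r - 1) +
       (\<Sum>j<r - 1. pdigit p u j * Y p (r - 1) j c)) mod p) [0..<p ^ (r - 1)]"

definition Phi :: "nat \<Rightarrow> nat \<Rightarrow> nat list \<Rightarrow> nat list" where
  "Phi p r xs = concat (map (phi p r) xs)"

text \<open>gamma_s(x)_(j+ip+1) = x_(j p^(s-2)+i+1) (1-based); 0-based: position k = j + i p
  with j = k mod p, i = k div p receives x at j p^(s-2) + i.\<close>
definition gamma :: "nat \<Rightarrow> nat \<Rightarrow> nat list \<Rightarrow> nat list" where
  "gamma p s x = map (\<lambda>k. x ! ((k mod p) * p ^ (s - 2) + k div p)) [0..<p ^ (s - 1)]"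

text \<open>tau_s(u) = Phi_(s-1)^(-1)(gamma_s^(-1)(phi_s(u))): the vector v in Z_(p^(s-1))^p
  with Phi_(s-1)(v) = gamma_s^(-1)(phi_s(u)), i.e. gamma_s(Phi_(s-1)(v)) = phi_s(u).\<close>
definition tau :: "nat \<Rightarrow> nat \<Rightarrow> nat \<Rightarrow> nat list" where
  "tau p s u = (THE v. length v = p \<and> (\<forall>x\<in>set v. x < p ^ (s - 1)) \<and>
                        gamma p s (Phi p (s - 1) v) = phi p s u)"

end

theory Submission imports Defs "HOL-Number_Theory.Cong" begin

lemma mod_pow_div: "0 < (p::nat) \<Longrightarrow> j < k \<Longrightarrow> ((c::nat) mod p^k) div p^j mod p = c div p^j mod p"
proof -
  assume h: "0 < p" "j < k"
  have pk: "p^k = p^j * p^(k-j)" using h by (simp add: power_add[symmetric])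
  have "c mod p^k = p^j * (c div p^j mod p^(k-j)) + c mod p^j" unfolding pk by (rule mod_mult2_eq)
  then have "(c mod p^k) div p^j = c div p^j mod p^(k-j)" using h by simp
  moreover have "p dvd p^(k-j)" using h by simp
  ultimately show ?thesis by (simp add: mod_mod_cancel)
qed

lemma Y_digit: "0 < p \<Longrightarrow> c < p^k \<Longrightarrow> j < k \<Longrightarrow> Y p k j c = pdigit p c j"
proof (induction k arbitrary: j c)
  case 0 then show ?case by simp
next
  case (Suc k)
  show ?case
  proof (cases "j < k")
    case True
    have "Y p (Suc k) j c = pdigit p (c mod p^k) j" using True Suc by simp
    also have "\<dots> = pdigit p c j" unfolding pdigit_def
      using True Suc.prems mod_pow_div by blast
    finally show ?thesis .
  next
    case False
    then have "j = k" using Suc by simp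
    then show ?thesis using Suc unfolding pdigit_def
      by (simp add: less_mult_imp_div_less mult.commute)
  qed
qed

lemma concat_nth_eq: "\<forall>x\<in>set xs. length x = q \<Longrightarrow> t < length xs * q \<Longrightarrow> concat xs ! t = xs ! (t div q) ! (t mod q)"
proof (induction xs arbitrary: t)
  case Nil then show ?case by simp
next
  case (Cons x xs)
  have q: "q > 0" using Cons.prems by (metis gr0I mult_0_right not_less_zero)
  show ?case
  proof (cases "t < q")
    case True then show ?thesis using Cons by (simp add: nth_append)
  next
    case False
    then have "concat (x#xs) ! t = concat xs ! (t - q)" using Cons by (simp add: nth_append)
    also have "\<dots> = xs ! ((t-q) div q) ! ((t-q) mod q)" using Cons False by auto
    also have "\<dots> = (x#xs) ! (t div q) ! (t mod q)" using False q
      by (simp add: div_if le_div_geq le_mod_geq)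
    finally show ?thesis .
  qed
qed

lemma length_phi[simp]: "length (phi p r u) = p^(r-1)"
  by (simp add: phi_def)

lemma phi_nth: "0 < p \<Longrightarrow> c < p^(r-1) \<Longrightarrow>
  phi p r u ! c = (pdigit p u (r-1) + (\<Sum>j<r-1. pdigit p u j * pdigit p c j)) mod p"
  by (simp add: phi_def Y_digit)

lemma pdigit_lt: "0 < p \<Longrightarrow> pdigit p u j < p"
  by (simp add: pdigit_def)

lemma pdigit_0: "pdigit p k 0 = k mod p"
  by (simp add: pdigit_def)

lemma pdigit_Suc: "pdigit p k (Suc j) = pdigit p (k div p) j"
  by (simp add: pdigit_def div_mult2_eq)

lemma digits_eq: "1 < p \<Longrightarrow> x < p^r \<Longrightarrow> y < p^r \<Longrightarrow> \<forall>j<r. pdigit p x j = pdigit p y j \<Longrightarrow> x = y"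
proof (induction r arbitrary: x y)
  case 0 then show ?case by simp
next
  case (Suc r)
  have "x div p < p^r" "y div p < p^r" using Suc.prems
    by (simp_all add: less_mult_imp_div_less mult.commute)
  moreover have "\<forall>j<r. pdigit p (x div p) j = pdigit p (y div p) j"
    using Suc.prems(4) by (metis Suc_mono pdigit_Suc)
  ultimately have "x div p = y div p" using Suc by blast
  moreover have "x mod p = y mod p" using Suc.prems(4) by (metis pdigit_0 zero_less_Suc)
  ultimately have "x div p * p + x mod p = y div p * p + y mod p" by simp
  then show ?case by simp
qed

lemma pdigit_pow: "1 < p \<Longrightarrow> pdigit p (p^j) i = (if i = j then 1 else 0)"
proof -
  assume p: "1 < p"
  show ?thesis
  proof (cases "i \<le> j")
    case True
    then have "p^j div p^i = p^(j-i)" using p by (simp add: power_diff)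
    show ?thesis
    proof (cases "i = j")
      case True
      then show ?thesis using p by (simp add: pdigit_def)
    next
      case False
      then obtain d where "j - i = Suc d" using \<open>i \<le> j\<close> by (metis Suc_diff_Suc le_neq_implies_less)
      then have "p^(j-i) = p * p^d" by simp
      then show ?thesis using False \<open>p^j div p^i = p^(j-i)\<close> by (simp add: pdigit_def)
    qed
  next
    case False
    then have "p^j < p^i" using p by (intro power_strict_increasing) auto
    then show ?thesis using False by (simp add: pdigit_def)
  qed
qed

lemma sum_pdigit_pow: "1 < p \<Longrightarrow> j < n \<Longrightarrow> (\<Sum>i<n. f i * pdigit p (p^j) i) = f j"
  by (simp add: pdigit_pow if_distrib cong: if_cong)

lemma phi_inj: "1 < p \<Longrightarrow> x < p^(Suc n) \<Longrightarrow> y < p^(Suc n) \<Longrightarrow> phi p (Suc n) x = phi p (Suc n) y \<Longrightarrow> x = y"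
proof -
  assume p: "1 < p" and x: "x < p^(Suc n)" and y: "y < p^(Suc n)" and e: "phi p (Suc n) x = phi p (Suc n) y"
  have p0: "0 < p" using p by simp
  have d0: "\<And>c. pdigit p 0 c = 0" by (simp add: pdigit_def)
  have "phi p (Suc n) x ! 0 = phi p (Suc n) y ! 0" using e by simp
  then have top: "pdigit p x n = pdigit p y n"
    using p0 by (simp add: phi_nth d0 pdigit_lt)
  have "pdigit p x j = pdigit p y j" if j: "j < n" for j
  proof -
    have c: "p^j < p^n" using j p by (intro power_strict_increasing) auto
    have "phi p (Suc n) x ! (p^j) = phi p (Suc n) y ! (p^j)" using e by simp
    then have "(pdigit p x n + pdigit p x j) mod p = (pdigit p y n + pdigit p y j) mod p"
      using p0 c j p by (simp add: phi_nth sum_pdigit_pow)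
    then have "pdigit p x j mod p = pdigit p y j mod p" using top
      by (metis cong_def cong_add_lcancel_nat)
    then show ?thesis using p0 by (simp add: pdigit_def)
  qed
  then have "\<forall>j<Suc n. pdigit p x j = pdigit p y j" using top by (simp add: less_Suc_eq)
  then show "x = y" using digits_eq p x y by blast
qed


lemma length_gamma[simp]: "length (gamma p s x) = p^(s-1)"
  by (simp add: gamma_def)

lemma gamma_Phi_nth:
  assumes p: "0 < p" and v: "length v = p" and k: "k < p^(Suc m)"
  shows "gamma p (Suc (Suc m)) (Phi p (Suc m) v) ! k = phi p (Suc m) (v ! (k mod p)) ! (k div p)"
proof -
  have b: "k div p < p^m" using k p by (simp add: less_mult_imp_div_less mult.commute)
  have a: "k mod p < p" using p by simp
  define t where "t = (k mod p) * p^m + k div p"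
  have t2: "t = k div p + k mod p * p^m" unfolding t_def by simp
  have tdiv: "t div p^m = k mod p" using b p unfolding t2 by simp
  have tmod: "t mod p^m = k div p" using b p unfolding t2 by simp
  have "t < (k mod p) * p^m + p^m" using b unfolding t_def by simp
  also have "\<dots> = Suc (k mod p) * p^m" by simp
  also have "\<dots> \<le> p * p^m" using a by (intro mult_right_mono) auto
  finally have tlt: "t < length (map (phi p (Suc m)) v) * p^m" using v by simp
  have "gamma p (Suc (Suc m)) (Phi p (Suc m) v) ! k = Phi p (Suc m) v ! t"
    using k unfolding gamma_def t_def by simp
  also have "\<dots> = map (phi p (Suc m)) v ! (t div p^m) ! (t mod p^m)"
    unfolding Phi_def by (rule concat_nth_eq) (use tlt in auto)
  also have "\<dots> = phi p (Suc m) (v ! (k mod p)) ! (k div p)"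
    using tdiv tmod a v by simp
  finally show ?thesis .
qed

lemma pdigit_low: "0 < p \<Longrightarrow> A < p^m \<Longrightarrow> j < m \<Longrightarrow> pdigit p (A + B * p^m) j = pdigit p A j"
proof -
  assume h: "0 < p" "A < p^m" "j < m"
  have pm: "p^m = p^j * p^(m-j)" using h by (simp add: power_add[symmetric])
  have "A + B * p^m = A + (B * p^(m-j)) * p^j" unfolding pm by simp
  have "(A + (B * p^(m-j)) * p^j) div p^j = A div p^j + B * p^(m-j)"
    using h div_mult_self1[of "p^j" A "B*p^(m-j)"] by simp
  then have "(A + B * p^m) div p^j = A div p^j + B * p^(m-j)"
    using \<open>A + B * p^m = A + (B * p^(m-j)) * p^j\<close> by metis
  moreover have "p dvd B * p^(m-j)" using h by simp
  ultimately show ?thesis unfolding pdigit_def by (simp add: mod_add_right_eq[symmetric] del: mod_add_right_eq)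
qed

lemma pdigit_top: "0 < p \<Longrightarrow> A < p^m \<Longrightarrow> B < p \<Longrightarrow> pdigit p (A + B * p^m) m = B"
  unfolding pdigit_def by simp

lemma pdigit_shift: "0 < p \<Longrightarrow> j < m \<Longrightarrow> pdigit p (u div p mod p^m) j = pdigit p u (Suc j)"
  unfolding pdigit_def using mod_pow_div[of p j m "u div p"] by (simp add: div_mult2_eq)


definition cand :: "nat \<Rightarrow> nat \<Rightarrow> nat \<Rightarrow> nat \<Rightarrow> nat" where
  "cand p m u a = (u div p) mod p^m + ((pdigit p u (Suc m) + a * pdigit p u 0) mod p) * p^m"

lemma idx_lt: "a < (p::nat) \<Longrightarrow> b < p^m \<Longrightarrow> a + p * b < p^(Suc m)"
proof -
  assume a: "a < p" and b: "b < p^m"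
  have "a + p * b < p * Suc b" using a by simp
  also have "\<dots> \<le> p * p^m" using b by (intro mult_left_mono) auto
  finally show ?thesis by simp
qed

lemma cand_lt: "0 < p \<Longrightarrow> a < p \<Longrightarrow> cand p m u a < p^(Suc m)"
proof -
  assume p: "0 < p" and a: "a < p"
  let ?A = "(u div p) mod p^m" and ?B = "(pdigit p u (Suc m) + a * pdigit p u 0) mod p"
  have "?A < p^m" using p by simp
  moreover have "?B < p" using p by simp
  ultimately have "?A + ?B * p^m < p^m + ?B * p^m" by simp
  also have "\<dots> = Suc ?B * p^m" by simp
  also have "\<dots> \<le> p * p^m" using \<open>?B < p\<close> by (intro mult_right_mono) auto
  finally show ?thesis unfolding cand_def by simp
qed

lemma phi_cand:
  assumes p: "1 < p" and a: "a < p" and b: "b < p^m"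
  shows "phi p (Suc m) (cand p m u a) ! b = phi p (Suc (Suc m)) u ! (a + p * b)"
proof -
  have p0: "0 < p" using p by simp
  let ?A = "(u div p) mod p^m" and ?B = "(pdigit p u (Suc m) + a * pdigit p u 0) mod p"
  have A: "?A < p^m" using p0 by simp
  have B: "?B < p" using p0 by simp
  have k: "a + p * b < p^(Suc m)" using idx_lt a b .
  have dk0: "pdigit p (a + p * b) 0 = a" using a by (simp add: pdigit_0)
  have dkS: "pdigit p (a + p * b) (Suc j) = pdigit p b j" for j
    using a p0 by (simp add: pdigit_Suc)
  have lo: "pdigit p (cand p m u a) j = pdigit p u (Suc j)" if "j < m" for j
    unfolding cand_def using pdigit_low[OF p0 A that] pdigit_shift[OF p0 that] by simp
  have hi: "pdigit p (cand p m u a) m = ?B"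
    unfolding cand_def using pdigit_top[OF p0 A B] .
  have "phi p (Suc m) (cand p m u a) ! b = (?B + (\<Sum>j<m. pdigit p u (Suc j) * pdigit p b j)) mod p"
    using p0 b by (simp add: phi_nth hi lo)
  also have "\<dots> = (pdigit p u (Suc m) + a * pdigit p u 0 + (\<Sum>j<m. pdigit p u (Suc j) * pdigit p b j)) mod p"
    by (simp add: mod_add_left_eq)
  also have "\<dots> = (pdigit p u (Suc m) + (\<Sum>j<Suc m. pdigit p u j * pdigit p (a + p * b) j)) mod p"
    unfolding sum.lessThan_Suc_shift[of "\<lambda>j. pdigit p u j * pdigit p (a + p * b) j" m]
    by (simp only: dk0 dkS) (simp add: algebra_simps)
  also have "\<dots> = phi p (Suc (Suc m)) u ! (a + p * b)"
    using p0 k by (simp add: phi_nth)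
  finally show ?thesis .
qed

lemma tau_formula:
  assumes p: "1 < p"
  shows "tau p (Suc (Suc m)) u = map (cand p m u) [0..<p]"
proof -
  have p0: "0 < p" using p by simp
  let ?P = "\<lambda>v. length v = p \<and> (\<forall>x\<in>set v. x < p ^ (Suc m)) \<and>
                        gamma p (Suc (Suc m)) (Phi p (Suc m) v) = phi p (Suc (Suc m)) u"
  let ?v = "map (cand p m u) [0..<p]"
  have ex: "?P ?v"
  proof (intro conjI)
    show "length ?v = p" by simp
    show "\<forall>x\<in>set ?v. x < p ^ (Suc m)" using cand_lt p0 by auto
    show "gamma p (Suc (Suc m)) (Phi p (Suc m) ?v) = phi p (Suc (Suc m)) u"
    proof (rule nth_equalityI)
      show "length (gamma p (Suc (Suc m)) (Phi p (Suc m) ?v)) = length (phi p (Suc (Suc m)) u)" by simp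
      fix k assume "k < length (gamma p (Suc (Suc m)) (Phi p (Suc m) ?v))"
      then have k: "k < p^(Suc m)" by simp
      have b: "k div p < p^m" using k p0 by (simp add: less_mult_imp_div_less mult.commute)
      have "gamma p (Suc (Suc m)) (Phi p (Suc m) ?v) ! k = phi p (Suc m) (?v ! (k mod p)) ! (k div p)"
        using gamma_Phi_nth[OF p0 _ k] by simp
      also have "\<dots> = phi p (Suc m) (cand p m u (k mod p)) ! (k div p)" using p0 by simp
      also have "\<dots> = phi p (Suc (Suc m)) u ! (k mod p + p * (k div p))"
        using phi_cand[OF p _ b] p0 by simp
      also have "k mod p + p * (k div p) = k" by simp
      finally show "gamma p (Suc (Suc m)) (Phi p (Suc m) ?v) ! k = phi p (Suc (Suc m)) u ! k" .
    qed
  qed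
  have uniq: "v = ?v" if Pv: "?P v" for v
  proof (rule nth_equalityI)
    show "length v = length ?v" using Pv by simp
    fix a assume "a < length v"
    then have a: "a < p" using Pv by simp
    have "phi p (Suc m) (v ! a) = phi p (Suc m) (cand p m u a)"
    proof (rule nth_equalityI)
      show "length (phi p (Suc m) (v ! a)) = length (phi p (Suc m) (cand p m u a))" by simp
      fix b assume "b < length (phi p (Suc m) (v ! a))"
      then have b: "b < p^m" by simp
      have k: "a + p * b < p^(Suc m)" using idx_lt a b .
      have km: "(a + p * b) mod p = a" "(a + p * b) div p = b" using a by auto
      have "phi p (Suc m) (v ! a) ! b = gamma p (Suc (Suc m)) (Phi p (Suc m) v) ! (a + p * b)"
        using gamma_Phi_nth[OF p0 _ k, of v] Pv km by simp
      also have "\<dots> = phi p (Suc (Suc m)) u ! (a + p * b)" using Pv by simp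
      also have "\<dots> = phi p (Suc m) (cand p m u a) ! b" using phi_cand[OF p a b] by simp
      finally show "phi p (Suc m) (v ! a) ! b = phi p (Suc m) (cand p m u a) ! b" .
    qed
    moreover have "v ! a < p^(Suc m)" using Pv a by auto
    ultimately have "v ! a = cand p m u a" using phi_inj[OF p _ cand_lt[OF p0 a]] by blast
    then show "v ! a = ?v ! a" using a by simp
  qed
  have "tau p (Suc (Suc m)) u = (THE v. ?P v)" unfolding tau_def by simp
  also have "\<dots> = ?v" using ex uniq by (rule the_equality)
  finally show ?thesis .
qed


theorem lemma4:
  fixes p s :: nat
  assumes "prime p" and "s \<ge> 2"
  shows "tau p s 1 = map (\<lambda>j. j * p ^ (s - 2)) [0..<p] \<and>
         (\<forall>i\<in>{1..s - 1}. \<forall>u<p ^ (s - 1).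
           tau p s ((p ^ i * u) mod p ^ s) = replicate p ((p ^ (i - 1) * u) mod p ^ (s - 1)))"
proof -
  have p: "1 < p" using assms(1) prime_gt_1_nat by blast
  have p0: "0 < p" using p by simp
  obtain m where s: "s = Suc (Suc m)" using assms(2) by (metis add_2_eq_Suc le_Suc_ex)
  have part1: "tau p s 1 = map (\<lambda>j. j * p ^ (s - 2)) [0..<p]"
  proof -
    have "1 < p ^ Suc m" using p by (intro one_less_power) auto
    then have d1: "pdigit p (Suc 0) (Suc m) = 0" by (simp add: pdigit_def del: power_Suc)
    have d0: "pdigit p (Suc 0) 0 = 1" using p by (simp add: pdigit_def)
    show ?thesis unfolding s tau_formula[OF p]
      by (rule map_cong) (use p d0 d1 in \<open>auto simp: cand_def\<close>)
  qed
  have part2: "tau p s ((p ^ i * u) mod p ^ s) = replicate p ((p ^ (i - 1) * u) mod p ^ (s - 1))"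
    if i: "i \<in> {1..s - 1}" and u: "u < p ^ (s - 1)" for i u
  proof -
    define u' where "u' = (p ^ i * u) mod p ^ s"
    have pi: "p ^ i = p * p ^ (i - 1)" using i by (cases i) auto
    have ps: "p ^ s = p * p ^ Suc m" using s by simp
    have u'eq: "u' = p * ((p ^ (i - 1) * u) mod p ^ Suc m)"
    proof -
      have "p ^ i * u = p * (p ^ (i - 1) * u)" using pi by simp
      then show ?thesis unfolding u'_def ps by (simp only: mult_mod_right)
    qed
    let ?w = "(p ^ (i - 1) * u) mod p ^ Suc m"
    have w: "?w < p ^ Suc m" using p0 by simp
    have udiv: "u' div p = ?w" using u'eq p0 by simp
    have umod: "pdigit p u' 0 = 0" using u'eq by (simp add: pdigit_0)
    have top: "pdigit p u' (Suc m) = ?w div p ^ m"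
    proof -
      have "pdigit p u' (Suc m) = ?w div p^m mod p" unfolding pdigit_def
        using udiv by (simp add: div_mult2_eq)
      moreover have "?w div p^m < p" using w p0 by (simp add: less_mult_imp_div_less)
      ultimately show ?thesis by simp
    qed
    have lt: "?w div p^m < p" using w p0 by (simp add: less_mult_imp_div_less)
    have "cand p m u' a = ?w mod p^m + ?w div p^m * p^m" for a
      unfolding cand_def udiv umod top using lt by simp
    then have "cand p m u' a = ?w" for a by (simp only: mod_div_mult_eq)
    then have "tau p s u' = replicate p ?w" unfolding s tau_formula[OF p]
      by (intro nth_equalityI) auto
    then show ?thesis unfolding u'_def s by simp
  qed
  show ?thesis using part1 part2 by blast
qed

end
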